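(* Let $\sigma:[0,\infty)\to[0,\infty)$ be nondecreasing with $\lim_{t\to\infty}\sigma(t)=\infty$. Assume that $\sigma(t)=o(t)$ as $t\to\infty$ and that $\sigma\sim(\sigma^{\star})_{\star}$. Then $\gamma(\sigma)=\gamma((\sigma^{\star})^{\iota})+1$.
   Context: Upper Legendre conjugate: $\sigma^{\star}(s):=\sup_{t\ge0}\{\sigma(t)-st\}$ for $s>0$ (finite under $\sigma(t)=o(t)$; nonincreasing, tends to $\infty$ as $s\to0$). For $h:(0,\infty)\to[0,\infty)$ nonincreasing with $\lim_{t\to0}h(t)=\infty$, the lower Legendre conjugate is $h_{\star}(t):=\inf_{s>0}\{h(s)+ts\}$; $(\sigma^{\star})_{\star}$ is the least concave majorant of $\sigma$. For a positive function $f$ on a subinterval of $(0,\infty)$, $f^{\iota}(t):=f(1/t)$; thus $(\sigma^{\star})^{\iota}(t)=\sigma^{\star}(1/t)$, a nondecreasing function tending to $\infty$. For functions $\sigma,\tau$ on an unbounded interval $I\subseteq[0,\infty)$, $\sigma\sim\tau$ means there is $C\ge1$ with $C^{-1}\tau(t)-C\le\sigma(t)\le C\tau(t)+C$ on $I$. For a nondecreasing function $\sigma$ tending to $\infty$ and $\gamma>0$, $(P_{\sigma,\gamma})$ holds if there is $K>1$ with $\limsup_{t\to\infty}\sigma(K^{\gamma}t)/\sigma(t)<K$; $\gamma(\sigma):=\sup\{\gamma>0:(P_{\sigma,\gamma})\text{ holds}\}$, and $:=0$ if none holds. *)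

theory Defs
  imports "HOL-Analysis.Analysis" "HOL-Library.Landau_Symbols"
begin

definition upper_conj :: "(real \<Rightarrow> real) \<Rightarrow> real \<Rightarrow> real" where
  "upper_conj \<sigma> s = (SUP t\<in>{0..}. \<sigma> t - s * t)"

definition lower_conj :: "(real \<Rightarrow> real) \<Rightarrow> real \<Rightarrow> real" where
  "lower_conj h t = (INF s\<in>{0<..}. h s + t * s)"

definition iota :: "(real \<Rightarrow> real) \<Rightarrow> real \<Rightarrow> real" where
  "iota f t = f (1 / t)"

definition equiv_on :: "real set \<Rightarrow> (real \<Rightarrow> real) \<Rightarrow> (real \<Rightarrow> real) \<Rightarrow> bool" where
  "equiv_on I \<sigma> \<tau> \<longleftrightarrow>
     (\<exists>C\<ge>1. \<forall>t\<in>I. \<tau> t / C - C \<le> \<sigma> t \<and> \<sigma> t \<le> C * \<tau> t + C)"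

definition prop_P :: "(real \<Rightarrow> real) \<Rightarrow> real \<Rightarrow> bool" where
  "prop_P \<sigma> \<gamma> \<longleftrightarrow>
     (\<exists>K>1. Limsup at_top (\<lambda>t. ereal (\<sigma> (K powr \<gamma> * t) / \<sigma> t)) < ereal K)"

definition gamma_idx :: "(real \<Rightarrow> real) \<Rightarrow> ereal" where
  "gamma_idx \<sigma> = (if \<exists>\<gamma>>0. prop_P \<sigma> \<gamma>
                    then Sup (ereal ` {\<gamma>. \<gamma> > 0 \<and> prop_P \<sigma> \<gamma>}) else 0)"

end

theory Submission
  imports Defs
begin

lemma powr_gt_one: "1 < (x::real) \<Longrightarrow> 0 < a \<Longrightarrow> 1 < x powr a"
  using powr_less_mono[of 0 a x] by simp

locale sg =
  fixes \<sigma> :: "real \<Rightarrow> real"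
  assumes mono: "mono_on {0..} \<sigma>"
    and nn: "\<And>t. t \<ge> 0 \<Longrightarrow> \<sigma> t \<ge> 0"
    and lim: "filterlim \<sigma> at_top at_top"
    and small: "\<sigma> \<in> o[at_top](\<lambda>t. t)"
begin

lemma monoD: "0 \<le> x \<Longrightarrow> x \<le> y \<Longrightarrow> \<sigma> x \<le> \<sigma> y"
  using mono by (auto simp: mono_on_def)

lemma bdd: assumes "s > 0" shows "bdd_above ((\<lambda>t. \<sigma> t - s * t) ` {0..})"
proof -
  have "eventually (\<lambda>t. norm (\<sigma> t) \<le> s * norm t) at_top"
    using landau_o.smallD[OF small assms] by simp
  then obtain T where T: "\<And>t. t \<ge> T \<Longrightarrow> norm (\<sigma> t) \<le> s * norm t"
    by (auto simp: eventually_at_top_linorder)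
  define T' where "T' = max T 0"
  have "\<sigma> t - s * t \<le> \<sigma> T'" if "t \<ge> 0" for t
  proof (cases "t \<ge> T'")
    case True
    then have "\<sigma> t \<le> s * t" using T[of t] that by (auto simp: T'_def)
    moreover have "\<sigma> T' \<ge> 0" using nn by (simp add: T'_def)
    ultimately show ?thesis by linarith
  next
    case False
    then have "\<sigma> t \<le> \<sigma> T'" using monoD that by auto
    moreover have "s * t \<ge> 0" using assms that by simp
    ultimately show ?thesis by linarith
  qed
  then show ?thesis by (auto simp: bdd_above_def)
qed

lemma h_ge: "s > 0 \<Longrightarrow> x \<ge> 0 \<Longrightarrow> \<sigma> x - s * x \<le> upper_conj \<sigma> s"
  unfolding upper_conj_def by (rule cSUP_upper[OF _ bdd]) auto

lemma h_nn: "s > 0 \<Longrightarrow> 0 \<le> upper_conj \<sigma> s"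
  using h_ge[of s 0] nn[of 0] by simp

lemma h_le: "(\<And>x. x \<ge> 0 \<Longrightarrow> \<sigma> x - s * x \<le> B) \<Longrightarrow> upper_conj \<sigma> s \<le> B"
  unfolding upper_conj_def by (rule cSUP_least) auto

lemma tau_le: "s > 0 \<Longrightarrow> u \<ge> 0 \<Longrightarrow> lower_conj (upper_conj \<sigma>) u \<le> upper_conj \<sigma> s + u * s"
  unfolding lower_conj_def
  by (rule cINF_lower) (auto intro!: bdd_belowI[where m=0] add_nonneg_nonneg h_nn)

lemma tau_ge: "(\<And>s. s > 0 \<Longrightarrow> m \<le> upper_conj \<sigma> s + u * s) \<Longrightarrow> m \<le> lower_conj (upper_conj \<sigma>) u"
  unfolding lower_conj_def by (rule cINF_greatest) auto

lemma H_big: "eventually (\<lambda>t. c \<le> upper_conj \<sigma> (1/t)) at_top"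
proof -
  have "eventually (\<lambda>x. \<sigma> x \<ge> c + 1) at_top" using lim by (simp add: filterlim_at_top)
  then obtain x0 where x0: "\<And>x. x \<ge> x0 \<Longrightarrow> \<sigma> x \<ge> c + 1" by (auto simp: eventually_at_top_linorder)
  define x where "x = max x0 1"
  have "c \<le> upper_conj \<sigma> (1/t)" if "t \<ge> x" for t
  proof -
    have t: "t > 0" "x \<ge> 0" using that by (auto simp: x_def)
    have "\<sigma> x - (1/t)*x \<le> upper_conj \<sigma> (1/t)" using h_ge[of "1/t" x] t by simp
    moreover have "(1/t)*x \<le> 1" using that t by (simp add: field_simps)
    moreover have "\<sigma> x \<ge> c + 1" using x0 by (simp add: x_def)
    ultimately show ?thesis by linarith
  qed
  then show ?thesis by (auto simp: eventually_at_top_linorder)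
qed

lemma sig_pos: "eventually (\<lambda>t. \<sigma> t > 0) at_top"
  using lim by (simp add: filterlim_at_top_dense)

abbreviation tau where "tau \<equiv> lower_conj (upper_conj \<sigma>)"

lemma Pfrom:
  assumes C: "C \<ge> 1" and eq: "\<And>t. t \<ge> 0 \<Longrightarrow> tau t / C - C \<le> \<sigma> t \<and> \<sigma> t \<le> C * tau t + C"
    and M: "M > 1" "\<gamma> > 0" "F \<ge> 0" "C^2 * F < M"
    and ev: "eventually (\<lambda>u. tau (M powr \<gamma> * u) \<le> F * tau u) at_top"
  shows "prop_P \<sigma> \<gamma>"
proof -
  define c where "c = (C^2 * F + M)/2"
  have c: "C^2 * F < c" "c < M" using M by (auto simp: c_def mult.commute)
  define D where "D = (C^3 * F + C)/(c - C^2 * F)"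
  have "eventually (\<lambda>u. \<sigma> u \<ge> max D 1) at_top" using lim unfolding filterlim_at_top by blast
  then have "eventually (\<lambda>u. u \<ge> 0 \<and> \<sigma> u \<ge> max D 1 \<and> tau (M powr \<gamma> * u) \<le> F * tau u) at_top"
    using ev eventually_ge_at_top[of 0] by eventually_elim auto
  then have "eventually (\<lambda>u. ereal (\<sigma> (M powr \<gamma> * u) / \<sigma> u) \<le> ereal c) at_top"
  proof eventually_elim
    case (elim u)
    have u: "u \<ge> 0" "\<sigma> u \<ge> D" "\<sigma> u \<ge> 1" and tt: "tau (M powr \<gamma> * u) \<le> F * tau u" using elim by auto
    have Mu: "M powr \<gamma> * u \<ge> 0" using u by simp
    have C0: "C > 0" using C by simp
    have "tau u / C - C \<le> \<sigma> u" using eq[OF u(1)] by simp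
    then have tu: "tau u \<le> C * \<sigma> u + C^2" using C0 by (simp add: field_simps power2_eq_square)
    have "\<sigma> (M powr \<gamma> * u) \<le> C * tau (M powr \<gamma> * u) + C" using eq[OF Mu] by simp
    also have "\<dots> \<le> C * (F * tau u) + C" using tt C0 by simp
    also have "\<dots> \<le> C * (F * (C * \<sigma> u + C^2)) + C" using tu C0 M(3)
      by (simp add: mult_left_mono)
    also have "\<dots> = C^2 * F * \<sigma> u + (C^3 * F + C)" by (simp add: algebra_simps power2_eq_square power3_eq_cube)
    also have "C^3 * F + C = D * (c - C^2 * F)" using c by (simp add: D_def)
    also have "D * (c - C^2 * F) \<le> \<sigma> u * (c - C^2 * F)" using u c by (intro mult_right_mono) auto
    finally have "\<sigma> (M powr \<gamma> * u) \<le> c * \<sigma> u" by (simp add: algebra_simps)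
    then show ?case using u by (simp add: divide_le_eq)
  qed
  then have "Limsup at_top (\<lambda>u. ereal (\<sigma> (M powr \<gamma> * u) / \<sigma> u)) \<le> ereal c"
    by (rule Limsup_bounded)
  also have "\<dots> < ereal M" using c by simp
  finally show ?thesis unfolding prop_P_def using M by blast
qed

lemma tau_scale: assumes "l \<ge> 1" "u \<ge> 0" shows "tau (l * u) \<le> l * tau u"
proof -
  have "tau (l * u) / l \<le> tau u"
  proof (rule tau_ge)
    fix s :: real assume s: "s > 0"
    have "tau (l * u) \<le> upper_conj \<sigma> s + l * u * s" using tau_le[OF s, of "l*u"] assms by simp
    also have "\<dots> \<le> l * (upper_conj \<sigma> s + u * s)"
      using h_nn[OF s] assms by (simp add: algebra_simps mult_le_cancel_right1)
    finally show "tau (l * u) / l \<le> upper_conj \<sigma> s + u * s" using assms by (simp add: divide_le_eq mult.commute)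
  qed
  then show ?thesis using assms by (simp add: divide_le_eq mult.commute)
qed

lemma PA:
  assumes C: "C \<ge> 1" and eq: "\<And>t. t \<ge> 0 \<Longrightarrow> tau t / C - C \<le> \<sigma> t \<and> \<sigma> t \<le> C * tau t + C"
    and g: "0 < \<gamma>" "\<gamma> < 1"
  shows "prop_P \<sigma> \<gamma>"
proof -
  define M where "M = (C^2 + 1) powr (1/(1-\<gamma>))"
  have b: "C^2 + 1 > 1" using C by simp
  have M1: "M > 1" unfolding M_def using b g by (intro powr_gt_one) auto
  have e1: "M powr (1 - \<gamma>) = C^2 + 1" unfolding M_def using g b by (simp add: powr_powr)
  have e2: "M = M powr \<gamma> * M powr (1 - \<gamma>)" using M1 by (simp add: powr_add[symmetric])
  have P: "M powr \<gamma> > 0" using M1 by simp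
  have "M = M powr \<gamma> * C^2 + M powr \<gamma>" using e2 unfolding e1 by (simp add: algebra_simps)
  then have "C^2 * M powr \<gamma> < M" using P by (metis less_add_same_cancel1 mult.commute)
  moreover have l1: "M powr \<gamma> \<ge> 1" using M1 g by (simp add: ge_one_powr_ge_zero)
  moreover have "eventually (\<lambda>u. tau (M powr \<gamma> * u) \<le> M powr \<gamma> * tau u) at_top"
    using eventually_ge_at_top[of 0] by eventually_elim (rule tau_scale[OF l1])
  ultimately show ?thesis by (intro Pfrom[OF C eq M1 g(1), of "M powr \<gamma>"]) auto
qed

lemma PC:
  assumes g: "\<gamma> > 1" "prop_P \<sigma> \<gamma>" "0 < \<gamma>'" "\<gamma>' < \<gamma> - 1"
  shows "prop_P (iota (upper_conj \<sigma>)) \<gamma>'"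
proof -
  obtain K where K: "K > 1" and L: "Limsup at_top (\<lambda>t. ereal (\<sigma> (K powr \<gamma> * t) / \<sigma> t)) < ereal K"
    using g(2) unfolding prop_P_def by blast
  define a where "a = K powr \<gamma>"
  have "eventually (\<lambda>t. ereal (\<sigma> (a*t)/\<sigma> t) < ereal K) at_top"
    using Limsup_lessD[OF L] by (simp add: a_def)
  then have "eventually (\<lambda>t. t \<ge> 0 \<and> \<sigma> (a*t) \<le> K * \<sigma> t) at_top"
    using sig_pos eventually_ge_at_top[of 0] by eventually_elim (auto simp: divide_less_eq)
  then obtain u0 where u0: "\<And>u. u \<ge> u0 \<Longrightarrow> u \<ge> 0 \<and> \<sigma> (a*u) \<le> K * \<sigma> u"
    by (auto simp: eventually_at_top_linorder)
  have u00: "u0 \<ge> 0" using u0[of u0] by simp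
  define b where "b = K powr (\<gamma> - 1)"
  have ab: "a = b * K" unfolding a_def b_def using K
    using powr_add[of K "\<gamma> - 1" 1] by simp
  have b0: "b > 0" and a0: "a > 0" using K by (auto simp: a_def b_def)
  define M where "M = K powr ((\<gamma> - 1)/\<gamma>')"
  have Mb: "M powr \<gamma>' = b" unfolding M_def b_def using g by (simp add: powr_powr)
  have "1 < (\<gamma> - 1)/\<gamma>'" using g by (simp add: field_simps)
  then have MK: "K < M" unfolding M_def using powr_less_mono[OF _ K, of 1] K by simp
  have "eventually (\<lambda>t. t > 0 \<and> upper_conj \<sigma> (1/(b*t)) \<le> K * upper_conj \<sigma> (1/t) \<and> upper_conj \<sigma> (1/t) > 0) at_top"
    using H_big[of "\<sigma> (a*u0)/K"] H_big[of 1] eventually_gt_at_top[of 0]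
  proof eventually_elim
    case (elim t)
    then have t: "t > 0" "\<sigma> (a*u0)/K \<le> upper_conj \<sigma> (1/t)" "1 \<le> upper_conj \<sigma> (1/t)" by auto
    have "upper_conj \<sigma> (1/(b*t)) \<le> K * upper_conj \<sigma> (1/t)"
    proof (rule h_le)
      fix x :: real assume x: "x \<ge> 0"
      define y where "y = x / a"
      have y: "y \<ge> 0" "x = a * y" using x a0 by (auto simp: y_def)
      have xe: "1/(b*t) * x = K * y / t" using y b0 t by (simp add: ab field_simps)
      show "\<sigma> x - 1/(b*t) * x \<le> K * upper_conj \<sigma> (1/t)"
      proof (cases "y \<ge> u0")
        case True
        have "\<sigma> x \<le> K * \<sigma> y" using u0[OF True] y by simp
        moreover have "\<sigma> y - (1/t) * y \<le> upper_conj \<sigma> (1/t)" using h_ge[of "1/t" y] t y by simp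
        ultimately have "\<sigma> x - K * y / t \<le> K * (\<sigma> y - (1/t) * y)" using K by (simp add: algebra_simps)
        also have "\<dots> \<le> K * upper_conj \<sigma> (1/t)"
          using \<open>\<sigma> y - (1/t) * y \<le> upper_conj \<sigma> (1/t)\<close> K by simp
        finally show ?thesis using xe by simp
      next
        case False
        have "\<sigma> x \<le> \<sigma> (a*u0)" using False y a0 x by (intro monoD) auto
        moreover have "K * y / t \<ge> 0" using K y t by simp
        moreover have "\<sigma> (a*u0) \<le> K * upper_conj \<sigma> (1/t)" using t K by (simp add: divide_le_eq mult.commute)
        ultimately show ?thesis using xe by simp
      qed
    qed
    then show ?case using t by simp
  qed
  then have "eventually (\<lambda>t. ereal (iota (upper_conj \<sigma>) (M powr \<gamma>' * t) / iota (upper_conj \<sigma>) t) \<le> ereal K) at_top"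
    by eventually_elim (auto simp: iota_def Mb divide_le_eq)
  then have "Limsup at_top (\<lambda>t. ereal (iota (upper_conj \<sigma>) (M powr \<gamma>' * t) / iota (upper_conj \<sigma>) t)) \<le> ereal K"
    by (rule Limsup_bounded)
  also have "\<dots> < ereal M" using MK by simp
  finally show ?thesis unfolding prop_P_def using MK K by (intro exI[of _ M]) auto
qed

lemma PB:
  assumes C: "C \<ge> 1" and eq: "\<And>t. t \<ge> 0 \<Longrightarrow> tau t / C - C \<le> \<sigma> t \<and> \<sigma> t \<le> C * tau t + C"
    and g: "\<gamma> > 0" "prop_P (iota (upper_conj \<sigma>)) \<gamma>" "0 < \<gamma>'" "\<gamma>' < \<gamma> + 1"
  shows "prop_P \<sigma> \<gamma>'"
proof -
  obtain K where K: "K > 1" and L: "Limsup at_top (\<lambda>t. ereal (iota (upper_conj \<sigma>) (K powr \<gamma> * t) / iota (upper_conj \<sigma>) t)) < ereal K"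
    using g(2) unfolding prop_P_def by blast
  define a where "a = K powr \<gamma>"
  have a1: "a \<ge> 1" using K g by (simp add: a_def ge_one_powr_ge_zero)
  have "eventually (\<lambda>t. ereal (upper_conj \<sigma> (1/(a*t)) / upper_conj \<sigma> (1/t)) < ereal K) at_top"
    using Limsup_lessD[OF L] by (simp add: a_def iota_def)
  then have "eventually (\<lambda>t. upper_conj \<sigma> (1/(a*t)) \<le> K * upper_conj \<sigma> (1/t)) at_top"
    using H_big[of 1] by eventually_elim (auto simp: divide_less_eq)
  then obtain t0 where t0: "\<And>t. t \<ge> t0 \<Longrightarrow> upper_conj \<sigma> (1/(a*t)) \<le> K * upper_conj \<sigma> (1/t)"
    by (auto simp: eventually_at_top_linorder)
  define s0 where "s0 = 1 / max t0 1"
  have s0: "s0 > 0" by (simp add: s0_def)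
  have step: "upper_conj \<sigma> (s/a) \<le> K * upper_conj \<sigma> s" if "0 < s" "s \<le> s0" for s
  proof -
    have m: "max t0 1 > 0" by simp
    have "s * max t0 1 \<le> 1" using that m by (simp add: s0_def field_simps)
    then have "1/s \<ge> max t0 1" using that by (simp add: le_divide_eq mult.commute)
    then have "upper_conj \<sigma> (1/(a*(1/s))) \<le> K * upper_conj \<sigma> (1/(1/s))" by (intro t0) auto
    then show ?thesis by simp
  qed
  have iter: "upper_conj \<sigma> (s/a^n) \<le> K^n * upper_conj \<sigma> s" if "0 < s" "s \<le> s0" for n s
  proof (induction n)
    case 0 then show ?case by simp
  next
    case (Suc n)
    have an: "a^n \<ge> 1" using a1 by simp
    have p: "0 < s/a^n" using that a1 by simp
    have q: "s/a^n \<le> s0" using that an by (simp add: divide_le_eq) (smt (verit) mult_le_cancel_left1)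
    have "upper_conj \<sigma> (s/a^Suc n) = upper_conj \<sigma> ((s/a^n)/a)" by (simp add: field_simps)
    also have "\<dots> \<le> K * upper_conj \<sigma> (s/a^n)" by (rule step[OF p q])
    also have "\<dots> \<le> K * (K^n * upper_conj \<sigma> s)" using Suc K by simp
    finally show ?case by simp
  qed
  define \<delta> where "\<delta> = (\<gamma>+1)/\<gamma>' - 1"
  have d0: "\<delta> > 0" using g by (simp add: \<delta>_def field_simps)
  have Kd: "K powr \<delta> > 1" using powr_gt_one[OF K d0] .
  obtain n where n: "C^2 < (K powr \<delta>)^n" using real_arch_pow[OF Kd] by blast
  have "C^2 \<ge> 1" using C by (simp add: one_le_power)
  then have n0: "n > 0" using n by (cases n) auto
  define M where "M = K powr (real n * ((\<gamma>+1)/\<gamma>'))"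
  have "(K powr (\<gamma>+1)) = a * K" unfolding a_def using K powr_add[of K \<gamma> 1] by simp
  moreover have "K powr (real n * (\<gamma>+1)) = (K powr (\<gamma>+1)) powr real n"
    by (simp add: powr_powr mult.commute)
  moreover have "(K powr (\<gamma>+1)) powr real n = (K powr (\<gamma>+1)) ^ n" using K by (simp add: powr_realpow)
  moreover have "M powr \<gamma>' = K powr (real n * (\<gamma>+1))" unfolding M_def using g by (simp add: powr_powr)
  ultimately have Mg: "M powr \<gamma>' = (a*K)^n" by simp
  have "M = (K powr \<delta>)^n * K^n" unfolding M_def \<delta>_def using K
    by (simp add: powr_realpow[symmetric] powr_powr powr_add[symmetric] algebra_simps)
  then have CM: "C^2 * K^n < M" using n K by simp
  have M1: "M > 1" unfolding M_def using K n0 g by (intro powr_gt_one) auto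
  define l where "l = (a*K)^n"
  define \<epsilon> where "\<epsilon> = K^n * s0 / (2*l)"
  have l0: "l > 0" "l = a^n * K^n" using a1 K by (auto simp: l_def power_mult_distrib)
  have e0: "\<epsilon> > 0" using K s0 l0 a1 by (simp add: \<epsilon>_def)
  have "eventually (\<lambda>u. tau (M powr \<gamma>' * u) \<le> K^n * tau u) at_top"
    using eventually_ge_at_top[of "max 0 (2 * upper_conj \<sigma> \<epsilon> / (K^n * s0))"]
  proof eventually_elim
    case (elim u)
    have u: "u \<ge> 0" "2 * upper_conj \<sigma> \<epsilon> / (K^n * s0) \<le> u" using elim by auto
    have Kn: "K^n > 0" using K by simp
    have "tau (l*u) / K^n \<le> tau u"
    proof (rule tau_ge)
      fix r :: real assume r: "r > 0"
      show "tau (l*u) / K^n \<le> upper_conj \<sigma> r + u * r"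
      proof (cases "r \<le> s0")
        case True
        have ra: "r / a^n > 0" using r a1 by simp
        have "tau (l*u) \<le> upper_conj \<sigma> (r/a^n) + l*u*(r/a^n)"
          using tau_le[OF ra, of "l*u"] u l0 by simp
        also have "l*u*(r/a^n) = K^n * u * r" using l0 a1 by (simp add: field_simps)
        also have "upper_conj \<sigma> (r/a^n) \<le> K^n * upper_conj \<sigma> r" by (rule iter[OF r True])
        finally have "tau (l*u) \<le> K^n * (upper_conj \<sigma> r + u * r)" by (simp add: algebra_simps)
        then show ?thesis using Kn by (simp add: divide_le_eq mult.commute)
      next
        case False
        have "tau (l*u) \<le> upper_conj \<sigma> \<epsilon> + l*u*\<epsilon>" using tau_le[OF e0, of "l*u"] u l0 by simp
        also have "l*u*\<epsilon> = K^n * s0 * u / 2" using l0 a1 by (simp add: \<epsilon>_def field_simps)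
        also have "upper_conj \<sigma> \<epsilon> \<le> K^n * s0 * u / 2" using u Kn s0 by (simp add: field_simps)
        finally have "tau (l*u) \<le> K^n * (s0 * u)" by (simp add: algebra_simps)
        also have "\<dots> \<le> K^n * (u * r)" using False u Kn by (intro mult_left_mono) (auto simp: mult.commute intro: mult_right_mono)
        also have "\<dots> \<le> K^n * (upper_conj \<sigma> r + u * r)" using h_nn[OF r] Kn by simp
        finally show ?thesis using Kn by (simp add: divide_le_eq mult.commute)
      qed
    qed
    then have "tau (l*u) \<le> K^n * tau u" using Kn by (simp add: divide_le_eq mult.commute)
    then show ?case by (simp add: Mg l_def)
  qed
  then show ?thesis using Pfrom[OF C eq M1 g(3), of "K^n"] CM K by simp
qed

end

lemma ereal_dense_le:
  assumes "0 < y" "\<And>r. 0 < r \<Longrightarrow> r < y \<Longrightarrow> ereal r \<le> z"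
  shows "ereal y \<le> z"
proof (rule dense_le_bounded[of 0])
  show "0 < ereal y" using assms by simp
next
  fix w :: ereal assume w: "0 < w" "w < ereal y"
  then obtain r where "w = ereal r" by (cases w) auto
  then show "w \<le> z" using w assms(2)[of r] by simp
qed

theorem proposition2p21:
  fixes \<sigma> :: "real \<Rightarrow> real"
  assumes "mono_on {0..} \<sigma>"
    and "\<And>t. t \<ge> 0 \<Longrightarrow> \<sigma> t \<ge> 0"
    and "filterlim \<sigma> at_top at_top"
    and "\<sigma> \<in> o[at_top](\<lambda>t. t)"
    and "equiv_on {0..} \<sigma> (lower_conj (upper_conj \<sigma>))"
  shows "gamma_idx \<sigma> = gamma_idx (iota (upper_conj \<sigma>)) + 1"
proof -
  interpret sg \<sigma> using assms(1-4) by unfold_locales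
  obtain C where C: "C \<ge> 1" and eq0: "\<forall>t\<in>{0..}. tau t / C - C \<le> \<sigma> t \<and> \<sigma> t \<le> C * tau t + C"
    using assms(5) unfolding equiv_on_def by blast
  have eq: "\<And>t. t \<ge> 0 \<Longrightarrow> tau t / C - C \<le> \<sigma> t \<and> \<sigma> t \<le> C * tau t + C" using eq0 by auto
  define SS where "SS = {\<gamma>. \<gamma> > 0 \<and> prop_P \<sigma> \<gamma>}"
  define SH where "SH = {\<gamma>. \<gamma> > 0 \<and> prop_P (iota (upper_conj \<sigma>)) \<gamma>}"
  have h12: "prop_P \<sigma> (1/2)" by (rule PA[OF C eq]) auto
  have ex: "\<exists>\<gamma>>0. prop_P \<sigma> \<gamma>" using h12 by (intro exI[of _ "1/2"]) simp
  have GS: "gamma_idx \<sigma> = Sup (ereal ` SS)" unfolding gamma_idx_def SS_def using ex by (rule if_P)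
  have SSle: "ereal x \<le> Sup (ereal ` SS)" if "0 < x" "prop_P \<sigma> x" for x
    using that by (intro Sup_upper imageI) (simp add: SS_def)
  have SHle: "ereal x \<le> Sup (ereal ` SH)" if "0 < x" "prop_P (iota (upper_conj \<sigma>)) x" for x
    using that by (intro Sup_upper imageI) (simp add: SH_def)
  show ?thesis
  proof (cases "SH = {}")
    case True
    have nex: "\<not> (\<exists>\<gamma>>0. prop_P (iota (upper_conj \<sigma>)) \<gamma>)" using True unfolding SH_def by blast
    have GH: "gamma_idx (iota (upper_conj \<sigma>)) = 0" unfolding gamma_idx_def using nex by (rule if_not_P)
    have "Sup (ereal ` SS) \<le> 1"
    proof (rule Sup_least)
      fix e assume "e \<in> ereal ` SS"
      then obtain x where x: "e = ereal x" "x > 0" "prop_P \<sigma> x" by (auto simp: SS_def)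
      have "x \<le> 1"
      proof (rule ccontr)
        assume nx: "\<not> x \<le> 1"
        have "prop_P (iota (upper_conj \<sigma>)) ((x-1)/2)" 
          by (rule PC[OF _ x(3)]) (use nx in auto)
        moreover have "(x-1)/2 > 0" using nx by simp
        ultimately show False using nex by blast
      qed
      then show "e \<le> 1" using x by simp
    qed
    moreover have "ereal 1 \<le> Sup (ereal ` SS)"
    proof (rule ereal_dense_le)
      fix r :: real assume "0 < r" "r < 1"
      then show "ereal r \<le> Sup (ereal ` SS)" by (intro SSle PA[OF C eq])
    qed simp
    ultimately have "Sup (ereal ` SS) = 1" by (metis antisym one_ereal_def)
    then show ?thesis using GS GH by simp
  next
    case False
    then obtain g0 where g0: "g0 > 0" "prop_P (iota (upper_conj \<sigma>)) g0" by (auto simp: SH_def)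
    have GH: "gamma_idx (iota (upper_conj \<sigma>)) = Sup (ereal ` SH)"
      unfolding gamma_idx_def SH_def using g0 by (intro if_P exI[of _ g0]) simp
    have "ereal 0 \<le> ereal g0" using g0 by simp
    then have gpos: "0 \<le> Sup (ereal ` SH)" using SHle[OF g0] by (metis zero_ereal_def order_trans)
    have "Sup (ereal ` SS) \<le> Sup (ereal ` SH) + 1"
    proof (rule Sup_least)
      fix e assume "e \<in> ereal ` SS"
      then obtain x where x: "e = ereal x" "x > 0" "prop_P \<sigma> x" by (auto simp: SS_def)
      show "e \<le> Sup (ereal ` SH) + 1"
      proof (cases "x \<le> 1")
        case True
        have "ereal x \<le> 0 + 1" using True by simp
        also have "\<dots> \<le> Sup (ereal ` SH) + 1" using gpos by (intro add_right_mono)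
        finally show ?thesis using x by simp
      next
        case False
        have "ereal (x - 1) \<le> Sup (ereal ` SH)"
        proof (rule ereal_dense_le)
          fix r :: real assume r: "0 < r" "r < x - 1"
          show "ereal r \<le> Sup (ereal ` SH)"
          proof (rule SHle[OF r(1)])
            show "prop_P (iota (upper_conj \<sigma>)) r" by (rule PC[OF _ x(3)]) (use False r in auto)
          qed
        qed (use False in simp)
        then have "ereal (x - 1) + 1 \<le> Sup (ereal ` SH) + 1" by (intro add_right_mono)
        then show ?thesis using x by simp
      qed
    qed
    moreover have "Sup (ereal ` SH) + 1 \<le> Sup (ereal ` SS)"
    proof -
      have "(SUP x\<in>SH. ereal x + 1) = Sup (ereal ` SH) + 1"
        by (rule SUP_ereal_add_left) (use False in simp_all)
      moreover have "(SUP x\<in>SH. ereal x + 1) \<le> Sup (ereal ` SS)"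
      proof (rule SUP_least)
        fix x assume x: "x \<in> SH"
        then have x0: "x > 0" "prop_P (iota (upper_conj \<sigma>)) x" by (auto simp: SH_def)
        have "ereal (x + 1) \<le> Sup (ereal ` SS)"
        proof (rule ereal_dense_le)
          fix r :: real assume r: "0 < r" "r < x + 1"
          show "ereal r \<le> Sup (ereal ` SS)"
          proof (rule SSle[OF r(1)])
            show "prop_P \<sigma> r" by (rule PB[OF C eq x0 r])
          qed
        qed (use x0 in simp)
        then show "ereal x + 1 \<le> Sup (ereal ` SS)" by simp
      qed
      ultimately show ?thesis by simp
    qed
    ultimately have "Sup (ereal ` SS) = Sup (ereal ` SH) + 1" by (rule antisym)
    then show ?thesis using GS GH by simp
  qed
qed

end
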